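(* Let $n\geq 1$ and let $R_\bullet$, $\Omega(R_\bullet)$, $N_*$, $D_*$, $\omega_q$, $\alpha_q$, $\beta_q$, $(\omega_q)_i$, $(\omega_q)_{i,j}$ be as in the context. Then for every $q\geq 0$: if $n$ is odd, $\omega_q$ is a cycle in $N_q\Omega(R_\bullet)$ (i.e. $\omega_q\in N_q\Omega(R_\bullet)$ and $d_0\omega_q=0$); if $n$ is even, $\alpha_q$ and $\beta_q$ are cycles in $N_q\Omega(R_\bullet)$. Furthermore, for any $n$, the elements $(\omega_{q+1})_r$, $(\omega_{q+1})_{j,k}$ and $y_r(\omega_{q+1})_{j,k}$ lie in $D_{q+1}\Omega(R_\bullet)$ for all $1\leq j<k\leq q+1$ and $1\leq r\leq q+1$.
   Context: All algebras are over $\mathbb{F}_2$ and (graded) commutative. Fix integers $n\geq 1$ and $|x|\geq 1$. Let $R_\bullet$ be the simplicial graded $\mathbb{F}_2$-algebra with $R_q=\mathbb{F}_2[x,y_1,\dots,y_q]$ ($q\geq 0$), $|y_i|=(n+1)|x|$, whose face maps $d_i:R_q\to R_{q-1}$ and degeneracy maps $s_i:R_q\to R_{q+1}$ ($0\le i\le q$) are the algebra maps given by $s_i(x)=x$, $d_i(x)=x$, $s_i(y_j)=y_j$ if $i\geq j$ and $s_i(y_j)=y_{j+1}$ if $i<j$; and $d_i(y_j)=x^{n+1}$ if $i=0,j=1$; $d_i(y_j)=y_{j-1}$ if $i<j$, $j>1$; $d_i(y_j)=y_j$ if $i\geq j$, $j<q$; $d_q(y_q)=0$. For a graded commutative $\mathbb{F}_2$-algebra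 $A$, the de Rham complex $\Omega(A)$ is the free $A$-algebra on generators ${\bf d}a$ ($a\in A$), $|{\bf d}a|=|a|-1$, modulo ${\bf d}(a+b)={\bf d}a+{\bf d}b$, ${\bf d}(ab)=({\bf d}a)b+a{\bf d}b$, $({\bf d}a)^2=0$; it is functorial, so $\Omega(R_\bullet)$ is a simplicial algebra. For a simplicial $\mathbb{F}_2$-vector space $V$, $N_q(V)=\bigcap_{1\le i\le q}\ker(d_i)$ is the normalized complex with differential $d_0$, and $D_q(V)\subseteq V_q$ is the subspace spanned by degenerate elements (images of the $s_i$). In $\Omega(R_q)$ put $\omega_q={\bf d}y_1\cdots{\bf d}y_q$ for $q>0$, $\omega_0=1$; $(\omega_q)_i$ is $\omega_q$ with the factor ${\bf d}y_i$ omitted and $(\omega_q)_{i,j}$ ($i<j$) is $\omega_q$ with ${\bf d}y_i,{\bf d}y_j$ omitted; $\alpha_q={\bf d}x\,\omega_q$ and $\beta_q=x\omega_q+{\bf d}x\sum_{i=1}^q y_i(\omega_q)_i$ for $q>0$, $\alpha_0={\bf d}x$, $\beta_0=x$. *)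

theory Defs
  imports "HOL-Library.Poly_Mapping" "HOL-Library.Z2"
begin

text \<open>Variables of the polynomial ring in which we model the de Rham complex
  Omega(R_q) = F2[x,y_1..y_q] tensor Lambda[dx,dy_1..dy_q]:
  X = x, Y j = y_j, DX = dx, DY j = dy_j.\<close>
datatype var = X | Y nat | DX | DY nat

type_synonym poly2 = "(var \<Rightarrow>\<^sub>0 nat) \<Rightarrow>\<^sub>0 bit"

definition Var :: "var \<Rightarrow> poly2" where
  "Var v = Poly_Mapping.single (Poly_Mapping.single v 1) 1"

definition monom :: "(var \<Rightarrow>\<^sub>0 nat) \<Rightarrow> poly2" where
  "monom m = Poly_Mapping.single m 1"

definition is_dvar :: "var \<Rightarrow> bool" where
  "is_dvar v = (case v of DX \<Rightarrow> True | DY _ \<Rightarrow> True | _ \<Rightarrow> False)"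

text \<open>A monomial is reduced if every differential occurs with exponent at most 1
  (the relations (da)^2 = 0).\<close>
definition reduced_mon :: "(var \<Rightarrow>\<^sub>0 nat) \<Rightarrow> bool" where
  "reduced_mon m = (\<forall>v. is_dvar v \<longrightarrow> Poly_Mapping.lookup m v \<le> 1)"

text \<open>Quotient map F2[x,y,dx,dy] -> Omega: kill non-reduced monomials.
  This is a ring homomorphism; reduced polynomials are the normal forms.\<close>
definition red :: "poly2 \<Rightarrow> poly2" where
  "red p = Abs_poly_mapping (\<lambda>m. if reduced_mon m then Poly_Mapping.lookup p m else 0)"

definition subst :: "(var \<Rightarrow> poly2) \<Rightarrow> poly2 \<Rightarrow> poly2" where
  "subst f p = (\<Sum>m\<in>Poly_Mapping.keys p. Poly_Mapping.single 0 (Poly_Mapping.lookup p m) *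
                              (\<Prod>v\<in>Poly_Mapping.keys m. f v ^ Poly_Mapping.lookup m v))"

definition dvar :: "var \<Rightarrow> var" where
  "dvar v = (case v of X \<Rightarrow> DX | Y j \<Rightarrow> DY j | _ \<Rightarrow> undefined)"

text \<open>The universal derivation d : F2[x,y_1,...] -> Omega (Kaehler differential),
  applied to polynomials in the variables X, Y j only.\<close>
definition dd :: "poly2 \<Rightarrow> poly2" where
  "dd p = (\<Sum>m\<in>Poly_Mapping.keys p. Poly_Mapping.single 0 (Poly_Mapping.lookup p m) *
             (\<Sum>v\<in>Poly_Mapping.keys m. of_nat (Poly_Mapping.lookup m v) *
                 (monom (m - Poly_Mapping.single v 1) * Var (dvar v))))"

definition allowed :: "nat \<Rightarrow> var set" where
  "allowed q = {X, DX} \<union> Y ` {1..q} \<union> DY ` {1..q}"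

definition Om :: "nat \<Rightarrow> poly2 set" where
  "Om q = {p. (\<forall>m\<in>Poly_Mapping.keys p. reduced_mon m \<and> Poly_Mapping.keys m \<subseteq> allowed q)}"

definition face_y :: "nat \<Rightarrow> nat \<Rightarrow> nat \<Rightarrow> nat \<Rightarrow> poly2" where
  "face_y n q i j =
     (if i = 0 \<and> j = 1 then Var X ^ (n + 1)
      else if i < j then Var (Y (j - 1))
      else if j < q then Var (Y j)
      else 0)"

definition degen_y :: "nat \<Rightarrow> nat \<Rightarrow> poly2" where
  "degen_y i j = (if i \<ge> j then Var (Y j) else Var (Y (j + 1)))"

definition omega_map :: "(nat \<Rightarrow> poly2) \<Rightarrow> var \<Rightarrow> poly2" where
  "omega_map g v = (case v of X \<Rightarrow> Var X | DX \<Rightarrow> Var DX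
                      | Y j \<Rightarrow> g j | DY j \<Rightarrow> dd (g j))"

definition faceO :: "nat \<Rightarrow> nat \<Rightarrow> nat \<Rightarrow> poly2 \<Rightarrow> poly2" where
  "faceO n q i p = red (subst (omega_map (face_y n q i)) p)"

definition degenO :: "nat \<Rightarrow> poly2 \<Rightarrow> poly2" where
  "degenO i p = red (subst (omega_map (degen_y i)) p)"

definition Nq :: "nat \<Rightarrow> nat \<Rightarrow> poly2 set" where
  "Nq n q = {p \<in> Om q. \<forall>i\<in>{1..q}. faceO n q i p = 0}"

definition is_cycle :: "nat \<Rightarrow> nat \<Rightarrow> poly2 \<Rightarrow> bool" where
  "is_cycle n q p = (p \<in> Nq n q \<and> (q > 0 \<longrightarrow> faceO n q 0 p = 0))"

text \<open>F2-span (= finite subset sums) and degenerate subspace D_q.\<close>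
definition f2span :: "poly2 set \<Rightarrow> poly2 set" where
  "f2span S = {sum id F | F. finite F \<and> F \<subseteq> S}"

definition Dq :: "nat \<Rightarrow> poly2 set" where
  "Dq q = f2span (\<Union>i\<in>{i. i + 1 \<le> q}. degenO i ` Om (q - 1))"

definition omega :: "nat \<Rightarrow> poly2" where
  "omega q = red (\<Prod>j\<in>{1..q}. Var (DY j))"

definition omega_i :: "nat \<Rightarrow> nat \<Rightarrow> poly2" where
  "omega_i q i = red (\<Prod>j\<in>{1..q} - {i}. Var (DY j))"

definition omega_ij :: "nat \<Rightarrow> nat \<Rightarrow> nat \<Rightarrow> poly2" where
  "omega_ij q i k = red (\<Prod>j\<in>{1..q} - {i, k}. Var (DY j))"

definition alpha :: "nat \<Rightarrow> poly2" where
  "alpha q = red (Var DX * omega q)"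

definition beta :: "nat \<Rightarrow> poly2" where
  "beta q = red (Var X * omega q + Var DX * (\<Sum>i\<in>{1..q}. Var (Y i) * omega_i q i))"

end

theory Submission
  imports Defs
begin

lemma poly_sum_singles: "p = (\<Sum>m\<in>Poly_Mapping.keys p. Poly_Mapping.single m (Poly_Mapping.lookup p m))"
  by (rule poly_mapping_eqI) (simp add: lookup_sum lookup_single when_def in_keys_iff)

definition FF :: "(var \<Rightarrow> poly2) \<Rightarrow> (var \<Rightarrow>\<^sub>0 nat) \<Rightarrow> poly2" where
  "FF f m = (\<Prod>v\<in>Poly_Mapping.keys m. f v ^ Poly_Mapping.lookup m v)"

lemma FF_superset: "finite T \<Longrightarrow> Poly_Mapping.keys m \<subseteq> T \<Longrightarrow> FF f m = (\<Prod>v\<in>T. f v ^ Poly_Mapping.lookup m v)"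
  unfolding FF_def by (rule prod.mono_neutral_left) (auto simp: in_keys_iff)

lemma FF_add: "FF f (a + b) = FF f a * FF f b"
proof -
  let ?T = "Poly_Mapping.keys a \<union> Poly_Mapping.keys b"
  have "FF f (a + b) = (\<Prod>v\<in>?T. f v ^ Poly_Mapping.lookup (a+b) v)"
    by (rule FF_superset) (auto dest: subsetD[OF keys_add])
  also have "\<dots> = (\<Prod>v\<in>?T. f v ^ Poly_Mapping.lookup a v) * (\<Prod>v\<in>?T. f v ^ Poly_Mapping.lookup b v)"
    by (simp add: lookup_add power_add prod.distrib)
  also have "\<dots> = FF f a * FF f b"
    by (subst (1 2) FF_superset[of ?T]) auto
  finally show ?thesis .
qed

lemma FF_zero: "FF f 0 = 1" by (simp add: FF_def)

lemma subst_FF: "subst f p = (\<Sum>m\<in>Poly_Mapping.keys p. Poly_Mapping.single 0 (Poly_Mapping.lookup p m) * FF f m)"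
  by (simp add: subst_def FF_def)

lemma subst_superset: "finite T \<Longrightarrow> Poly_Mapping.keys p \<subseteq> T \<Longrightarrow>
   subst f p = (\<Sum>m\<in>T. Poly_Mapping.single 0 (Poly_Mapping.lookup p m) * FF f m)"
  unfolding subst_FF by (rule sum.mono_neutral_left) (auto simp: in_keys_iff)

lemma subst_add: "subst f (p + q) = subst f p + subst f q"
proof -
  let ?T = "Poly_Mapping.keys p \<union> Poly_Mapping.keys q"
  have "subst f (p + q) = (\<Sum>m\<in>?T. Poly_Mapping.single 0 (Poly_Mapping.lookup (p+q) m) * FF f m)"
    by (rule subst_superset) (auto dest: subsetD[OF keys_add])
  also have "\<dots> = (\<Sum>m\<in>?T. Poly_Mapping.single 0 (Poly_Mapping.lookup p m) * FF f m)
      + (\<Sum>m\<in>?T. Poly_Mapping.single 0 (Poly_Mapping.lookup q m) * FF f m)"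
    by (simp only: lookup_add single_add distrib_right sum.distrib)
  also have "\<dots> = subst f p + subst f q"
    by (subst (1 2) subst_superset[of ?T]) auto
  finally show ?thesis .
qed

lemma subst_zero: "subst f 0 = 0" by (simp add: subst_def)

lemma subst_sum: "subst f (\<Sum>i\<in>I. p i) = (\<Sum>i\<in>I. subst f (p i))"
  by (induction I rule: infinite_finite_induct) (auto simp: subst_zero subst_add)

lemma subst_single: "subst f (Poly_Mapping.single m c) = Poly_Mapping.single 0 c * FF f m"
  by (simp add: subst_FF)

lemma single0_mult: "Poly_Mapping.single (0::var \<Rightarrow>\<^sub>0 nat) (a * b) = (Poly_Mapping.single 0 a * Poly_Mapping.single 0 b :: poly2)"
  by (subst mult_single) simp

lemma subst_mult: "subst f (p * q) = subst f p * subst f q"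
proof -
  have "p * q = (\<Sum>a\<in>Poly_Mapping.keys p. Poly_Mapping.single a (Poly_Mapping.lookup p a)) *
                (\<Sum>b\<in>Poly_Mapping.keys q. Poly_Mapping.single b (Poly_Mapping.lookup q b))"
    by (simp flip: poly_sum_singles)
  also have "\<dots> = (\<Sum>a\<in>Poly_Mapping.keys p. \<Sum>b\<in>Poly_Mapping.keys q.
      Poly_Mapping.single (a + b) (Poly_Mapping.lookup p a * Poly_Mapping.lookup q b))"
    by (simp add: sum_product mult_single)
  finally have "subst f (p * q) = (\<Sum>a\<in>Poly_Mapping.keys p. \<Sum>b\<in>Poly_Mapping.keys q.
      (Poly_Mapping.single 0 (Poly_Mapping.lookup p a) * FF f a) * (Poly_Mapping.single 0 (Poly_Mapping.lookup q b) * FF f b))"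
    by (simp only: subst_sum subst_single FF_add single0_mult ac_simps)
  also have "\<dots> = subst f p * subst f q"
    by (simp add: subst_FF sum_product)
  finally show ?thesis .
qed

lemma subst_one: "subst f 1 = 1"
  by (simp add: subst_FF FF_zero)

lemma subst_Var: "subst f (Var v) = f v"
  by (simp add: Var_def subst_single FF_def)

lemma subst_prod: "subst f (\<Prod>i\<in>I. p i) = (\<Prod>i\<in>I. subst f (p i))"
  by (induction I rule: infinite_finite_induct) (auto simp: subst_one subst_mult)

lemma subst_power: "subst f (p ^ k) = subst f p ^ k"
  by (induction k) (auto simp: subst_one subst_mult)

lemma lookup_red: "Poly_Mapping.lookup (red p) m = (if reduced_mon m then Poly_Mapping.lookup p m else 0)"
proof -
  have "finite {m. (if reduced_mon m then Poly_Mapping.lookup p m else 0) \<noteq> 0}"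
    by (rule finite_subset[OF _ finite_lookup[of p]]) auto
  then show ?thesis unfolding red_def by simp
qed

lemma red_add: "red (p + q) = red p + red q"
  by (rule poly_mapping_eqI) (simp only: lookup_red lookup_add, simp)

lemma red_zero: "red 0 = 0"
  by (rule poly_mapping_eqI) (simp add: lookup_red)

lemma red_sum: "red (\<Sum>i\<in>I. p i) = (\<Sum>i\<in>I. red (p i))"
  by (induction I rule: infinite_finite_induct) (auto simp: red_zero red_add)

lemma red_single: "red (Poly_Mapping.single m c) = (if reduced_mon m then Poly_Mapping.single m c else 0)"
  by (rule poly_mapping_eqI) (simp add: lookup_red lookup_single when_def)


lemma two_poly2: "(2::poly2) = 0"
proof -
  have "(2::poly2) = Poly_Mapping.single 0 2" by (simp only: single_numeral)
  also have "\<dots> = Poly_Mapping.single 0 0" by (simp only: bit_2_eq_0)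
  also have "\<dots> = 0" by (simp only: single_zero)
  finally show ?thesis .
qed

lemma add_self_poly2: "(p::poly2) + p = 0"
proof -
  have "p + p = 2 * p" by simp
  then show ?thesis by (simp add: two_poly2)
qed


lemma of_nat_poly2: "(of_nat k :: poly2) = (if even k then 0 else 1)"
proof (induction k)
  case 0 then show ?case by simp
next
  case (Suc k) then show ?case
    by (auto simp: add_self_poly2)
qed

lemma red_kill: assumes "is_dvar w" shows "red (Var w * (Var w * p)) = 0"
proof -
  have e: "Var w * (Var w * Poly_Mapping.single b c) =
      Poly_Mapping.single (Poly_Mapping.single w 1 + Poly_Mapping.single w 1 + b) c" for b c
    by (simp add: Var_def mult_single add.assoc)
  have "Var w * (Var w * p) = (\<Sum>b\<in>Poly_Mapping.keys p. Var w * (Var w * Poly_Mapping.single b (Poly_Mapping.lookup p b)))"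
    by (subst poly_sum_singles[of p]) (simp only: sum_distrib_left)
  also have "\<dots> = (\<Sum>b\<in>Poly_Mapping.keys p.
      Poly_Mapping.single (Poly_Mapping.single w 1 + Poly_Mapping.single w 1 + b) (Poly_Mapping.lookup p b))"
    by (simp only: e)
  finally have eq: "Var w * (Var w * p) = \<dots>" .
  have nr: "\<not> reduced_mon (Poly_Mapping.single w 1 + Poly_Mapping.single w 1 + b)" for b
    using assms unfolding reduced_mon_def by (intro notI) (drule spec[of _ w], simp add: lookup_add)
  show ?thesis unfolding eq red_sum red_single using nr by simp
qed

lemma Var_pow: "Var v ^ k = Poly_Mapping.single (Poly_Mapping.single v k) 1"
proof (induction k)
  case 0 then show ?case by simp
next
  case (Suc k) then show ?case
    by (simp add: Var_def mult_single single_add[symmetric])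
qed

lemma prod_Var: "finite A \<Longrightarrow> (\<Prod>v\<in>A. Var v) = Poly_Mapping.single (\<Sum>v\<in>A. Poly_Mapping.single v 1) 1"
proof (induction A rule: finite_induct)
  case empty then show ?case by simp
next
  case (insert a A) then show ?case
    by (simp add: Var_def mult_single)
qed

lemma lookup_sum_single: "finite A \<Longrightarrow> Poly_Mapping.lookup (\<Sum>v\<in>A. Poly_Mapping.single v (1::nat)) w = (if w \<in> A then 1 else 0)"
  by (simp add: lookup_sum lookup_single when_def)

lemma lookup_sum_single': "finite A \<Longrightarrow> Poly_Mapping.lookup (\<Sum>v\<in>A. Poly_Mapping.single v (Suc 0)) w = (if w \<in> A then 1 else 0)"
  by (simp add: lookup_sum lookup_single when_def)

lemma red_prod_Var: "finite A \<Longrightarrow> red (\<Prod>v\<in>A. Var v) = (\<Prod>v\<in>A. Var v)"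
  by (simp add: prod_Var red_single reduced_mon_def lookup_sum_single')

lemma Om_prod_Var: "finite A \<Longrightarrow> A \<subseteq> allowed q \<Longrightarrow> (\<Prod>v\<in>A. Var v) \<in> Om q"
  by (auto simp: prod_Var Om_def reduced_mon_def lookup_sum_single' in_keys_iff split: if_splits)

lemma Om_add: "p \<in> Om q \<Longrightarrow> p' \<in> Om q \<Longrightarrow> p + p' \<in> Om q"
proof (unfold Om_def, safe)
  fix m assume a: "\<forall>m\<in>Poly_Mapping.keys p. reduced_mon m \<and> Poly_Mapping.keys m \<subseteq> allowed q"
    "\<forall>m\<in>Poly_Mapping.keys p'. reduced_mon m \<and> Poly_Mapping.keys m \<subseteq> allowed q"
    and m: "m \<in> Poly_Mapping.keys (p + p')"
  from m have "m \<in> Poly_Mapping.keys p \<or> m \<in> Poly_Mapping.keys p'" using keys_add[of p p'] by auto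
  then show "reduced_mon m" using a by auto
  fix x assume "x \<in> Poly_Mapping.keys m"
  with \<open>m \<in> Poly_Mapping.keys p \<or> m \<in> Poly_Mapping.keys p'\<close> a show "x \<in> allowed q" by auto
qed

lemma Om_zero: "0 \<in> Om q" by (simp add: Om_def)

lemma Om_sum: "(\<And>i. i \<in> I \<Longrightarrow> p i \<in> Om q) \<Longrightarrow> (\<Sum>i\<in>I. p i) \<in> Om q"
  by (induction I rule: infinite_finite_induct) (auto simp: Om_zero Om_add)

lemma dd_single: "dd (Poly_Mapping.single m 1) = (\<Sum>v\<in>Poly_Mapping.keys m. of_nat (Poly_Mapping.lookup m v) *
                 (monom (m - Poly_Mapping.single v 1) * Var (dvar v)))"
  by (simp add: dd_def)

lemma dd_Var: "dd (Var v) = Var (dvar v)"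
  by (simp add: Var_def dd_single monom_def)

lemma dd_zero: "dd 0 = 0" by (simp add: dd_def)

lemma dd_Xpow: "dd (Var X ^ Suc n) = of_nat (Suc n) * (Var X ^ n * Var DX)"
proof -
  have "Poly_Mapping.single X (Suc n) - Poly_Mapping.single X 1 = Poly_Mapping.single X n"
    by (rule poly_mapping_eqI) (simp add: lookup_minus lookup_single when_def)
  then show ?thesis
    by (simp only: Var_pow dd_single) (simp add: monom_def dvar_def Var_def)
qed

lemma prod_DY: "finite S \<Longrightarrow> (\<Prod>j\<in>S. Var (DY j)) = (\<Prod>v\<in>DY ` S. Var v)"
  by (simp add: prod.reindex inj_on_def)

lemma Var_mult_prod: "finite B \<Longrightarrow> a \<notin> B \<Longrightarrow> Var a * (\<Prod>v\<in>B. Var v) = (\<Prod>v\<in>insert a B. Var v)"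
  by simp

lemma red_W: "finite S \<Longrightarrow> red (\<Prod>j\<in>S. Var (DY j)) = (\<Prod>j\<in>S. Var (DY j))"
  by (simp add: prod_DY red_prod_Var)

lemma red_VW: "finite S \<Longrightarrow> (\<And>j. a \<noteq> DY j) \<Longrightarrow>
    red (Var a * (\<Prod>j\<in>S. Var (DY j))) = Var a * (\<Prod>j\<in>S. Var (DY j))"
  by (subst (1 2) prod_DY, simp, subst (1 2) Var_mult_prod, auto simp: red_prod_Var)

lemma red_VVW: "finite S \<Longrightarrow> (\<And>j. a \<noteq> DY j) \<Longrightarrow> (\<And>j. b \<noteq> DY j) \<Longrightarrow> a \<noteq> b \<Longrightarrow>
    red (Var a * (Var b * (\<Prod>j\<in>S. Var (DY j)))) = Var a * (Var b * (\<Prod>j\<in>S. Var (DY j)))"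
  apply (subst (1 2) prod_DY, simp)
  apply (subst (1 2) Var_mult_prod, simp, blast)
  apply (subst (1 2) Var_mult_prod, simp, simp, blast)
  apply (simp add: red_prod_Var del: prod.insert)
  done

lemma DY_allowed: "S \<subseteq> {1..q} \<Longrightarrow> DY ` S \<subseteq> allowed q"
  by (auto simp: allowed_def)

lemma Om_W: "S \<subseteq> {1..q} \<Longrightarrow> (\<Prod>j\<in>S. Var (DY j)) \<in> Om q"
  using finite_subset[of S "{1..q}"]
  by (subst prod_DY) (auto intro!: Om_prod_Var DY_allowed)

lemma Om_VW: "S \<subseteq> {1..q} \<Longrightarrow> a \<in> allowed q \<Longrightarrow> (\<And>j. a \<noteq> DY j) \<Longrightarrow>
     Var a * (\<Prod>j\<in>S. Var (DY j)) \<in> Om q"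
proof -
  assume a: "S \<subseteq> {1..q}" "a \<in> allowed q" "\<And>j. a \<noteq> DY j"
  then have f: "finite S" using finite_subset by blast
  have "(\<Prod>v\<in>insert a (DY ` S). Var v) = Var a * (\<Prod>v\<in>DY ` S. Var v)"
    using a f by (intro prod.insert) auto
  then have "Var a * (\<Prod>j\<in>S. Var (DY j)) = (\<Prod>v\<in>insert a (DY ` S). Var v)"
    using f by (simp add: prod_DY)
  also have "\<dots> \<in> Om q" using a f DY_allowed[of S q] by (intro Om_prod_Var) auto
  finally show ?thesis .
qed

lemma Om_VVW: "S \<subseteq> {1..q} \<Longrightarrow> a \<in> allowed q \<Longrightarrow> b \<in> allowed q \<Longrightarrow> (\<And>j. a \<noteq> DY j) \<Longrightarrow> (\<And>j. b \<noteq> DY j) \<Longrightarrow> a \<noteq> b \<Longrightarrow>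
     Var a * (Var b * (\<Prod>j\<in>S. Var (DY j))) \<in> Om q"
proof -
  assume a: "S \<subseteq> {1..q}" "a \<in> allowed q" "b \<in> allowed q" "\<And>j. a \<noteq> DY j" "\<And>j. b \<noteq> DY j" "a \<noteq> b"
  then have f: "finite S" using finite_subset by blast
  have "(\<Prod>v\<in>insert a (insert b (DY ` S)). Var v) = Var a * (\<Prod>v\<in>insert b (DY ` S). Var v)"
    using a f by (intro prod.insert) auto
  moreover have "(\<Prod>v\<in>insert b (DY ` S). Var v) = Var b * (\<Prod>v\<in>DY ` S. Var v)"
    using a f by (intro prod.insert) auto
  ultimately have "Var a * (Var b * (\<Prod>j\<in>S. Var (DY j))) = (\<Prod>v\<in>insert a (insert b (DY ` S)). Var v)"
    using f by (simp add: prod_DY)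
  also have "\<dots> \<in> Om q" using a f DY_allowed[of S q] by (intro Om_prod_Var) auto
  finally show ?thesis .
qed

lemma omega_eq: "omega q = (\<Prod>j\<in>{1..q}. Var (DY j))"
  by (simp add: omega_def red_W)

lemma omega_i_eq: "omega_i q i = (\<Prod>j\<in>{1..q} - {i}. Var (DY j))"
  by (simp add: omega_i_def red_W)

lemma omega_ij_eq: "omega_ij q i k = (\<Prod>j\<in>{1..q} - {i, k}. Var (DY j))"
  by (simp add: omega_ij_def red_W)

lemma alpha_eq: "alpha q = Var DX * (\<Prod>j\<in>{1..q}. Var (DY j))"
  by (simp add: alpha_def omega_eq red_VW)

lemma beta_eq: "beta q = Var X * (\<Prod>j\<in>{1..q}. Var (DY j)) +
   (\<Sum>l\<in>{1..q}. Var DX * (Var (Y l) * (\<Prod>j\<in>{1..q} - {l}. Var (DY j))))"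
  by (simp add: beta_def omega_eq omega_i_eq red_add red_VW red_sum red_VVW mult.assoc sum_distrib_left)

lemma fy_pos: "1 \<le> i \<Longrightarrow> i \<le> q \<Longrightarrow> 1 \<le> j \<Longrightarrow> j \<le> q \<Longrightarrow> \<not> (i = q \<and> j = q) \<Longrightarrow>
   face_y n q i j = Var (Y (if i < j then j - 1 else j))"
  by (auto simp: face_y_def)

lemma fy_qq: "1 \<le> q \<Longrightarrow> face_y n q q q = 0"
  by (auto simp: face_y_def)

lemma fy_01: "face_y n q 0 1 = Var X ^ Suc n"
  by (simp add: face_y_def)

lemma fy_0: "2 \<le> j \<Longrightarrow> face_y n q 0 j = Var (Y (j - 1))"
  by (simp add: face_y_def)

lemma om_X [simp]: "omega_map g X = Var X" and om_DX [simp]: "omega_map g DX = Var DX"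
  and om_Y [simp]: "omega_map g (Y j) = g j" and om_DY [simp]: "omega_map g (DY j) = dd (g j)"
  by (simp_all add: omega_map_def)

lemma subst_W: "subst f (\<Prod>j\<in>S. Var (DY j)) = (\<Prod>j\<in>S. f (DY j))"
  by (simp add: subst_prod subst_Var)

lemma dd_VarY: "dd (Var (Y k)) = Var (DY k)"
  by (simp add: dd_Var dvar_def)

lemma dvar_DY: "is_dvar (DY i)" and dvar_DX: "is_dvar DX"
  by (simp_all add: is_dvar_def)

lemma K1: assumes "1 \<le> i" "i < q" "finite S" "i \<in> S" "i + 1 \<in> S"
  shows "\<exists>R. (\<Prod>j\<in>S. dd (face_y n q i j)) = Var (DY i) * (Var (DY i) * R)"
proof -
  have a: "dd (face_y n q i i) = Var (DY i)" using assms by (simp add: fy_pos dd_VarY)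
  have b: "dd (face_y n q i (i+1)) = Var (DY i)" using assms by (simp add: fy_pos dd_VarY)
  have "(\<Prod>j\<in>S. dd (face_y n q i j)) = dd (face_y n q i i) * (\<Prod>j\<in>S - {i}. dd (face_y n q i j))"
    using assms by (intro prod.remove)
  also have "(\<Prod>j\<in>S - {i}. dd (face_y n q i j)) = dd (face_y n q i (i+1)) * (\<Prod>j\<in>S - {i} - {i+1}. dd (face_y n q i j))"
    using assms by (intro prod.remove) auto
  finally show ?thesis unfolding a b by blast
qed

lemma K2: assumes "1 \<le> q" "finite S" "q \<in> S"
  shows "(\<Prod>j\<in>S. dd (face_y n q q j)) = 0"
  using assms by (intro prod_zero) (auto intro!: bexI[of _ q] simp: fy_qq dd_zero)

lemma K3: assumes "finite S" "1 \<in> S"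
  shows "(\<Prod>j\<in>S. dd (face_y n q 0 j)) = dd (Var X ^ Suc n) * (\<Prod>j\<in>S - {1}. dd (face_y n q 0 j))"
  by (simp only: prod.remove[OF assms] fy_01)

lemma dd_Xpow_odd: "odd n \<Longrightarrow> dd (Var X ^ Suc n) = 0"
  by (simp only: dd_Xpow of_nat_poly2) simp

lemma dd_Xpow_even: "even n \<Longrightarrow> dd (Var X ^ Suc n) = Var X ^ n * Var DX"
  by (simp only: dd_Xpow of_nat_poly2) simp

lemma P_mid1: assumes "1 \<le> i" "i < q"
  shows "(\<Prod>j\<in>{1..q} - {i}. dd (face_y n q i j)) = (\<Prod>k\<in>{1..q-1}. Var (DY k))"
proof -
  let ?h = "\<lambda>j. if i < j then j - 1 else j"
  have "(\<Prod>j\<in>{1..q} - {i}. dd (face_y n q i j)) = (\<Prod>j\<in>{1..q} - {i}. Var (DY (?h j)))"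
    using assms by (intro prod.cong) (auto simp: fy_pos dd_VarY simp del: One_nat_def)
  also have "\<dots> = (\<Prod>k\<in>{1..q-1}. Var (DY k))"
    by (rule prod.reindex_bij_betw[of ?h _ _ "\<lambda>k. Var (DY k)"],
        rule bij_betw_byWitness[where f'="\<lambda>k. if k < i then k else k + 1"]) (use assms in auto)
  finally show ?thesis .
qed

lemma P_mid2: assumes "1 \<le> i" "i < q"
  shows "(\<Prod>j\<in>{1..q} - {i+1}. dd (face_y n q i j)) = (\<Prod>k\<in>{1..q-1}. Var (DY k))"
proof -
  let ?h = "\<lambda>j. if i < j then j - 1 else j"
  have "(\<Prod>j\<in>{1..q} - {i+1}. dd (face_y n q i j)) = (\<Prod>j\<in>{1..q} - {i+1}. Var (DY (?h j)))"
    using assms by (intro prod.cong) (auto simp: fy_pos dd_VarY simp del: One_nat_def)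
  also have "\<dots> = (\<Prod>k\<in>{1..q-1}. Var (DY k))"
    by (rule prod.reindex_bij_betw[of ?h _ _ "\<lambda>k. Var (DY k)"],
        rule bij_betw_byWitness[where f'="\<lambda>k. if k \<le> i then k else k + 1"]) (use assms in auto)
  finally show ?thesis .
qed

lemma faceW: "faceO n q i (\<Prod>j\<in>S. Var (DY j)) = red (\<Prod>j\<in>S. dd (face_y n q i j))"
  by (simp add: faceO_def subst_W)

lemma face_omega: assumes "i \<in> {1..q}" shows "faceO n q i (omega q) = 0"
proof (cases "i < q")
  case True
  then obtain R where "(\<Prod>j\<in>{1..q}. dd (face_y n q i j)) = Var (DY i) * (Var (DY i) * R)"
    using K1[of i q "{1..q}" n] assms by auto
  then show ?thesis by (simp add: omega_eq faceW red_kill dvar_DY)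
next
  case False
  then have "i = q" using assms by auto
  then show ?thesis using assms by (simp add: omega_eq faceW K2 red_zero)
qed

lemma face0_omega: assumes "odd n" "0 < q" shows "faceO n q 0 (omega q) = 0"
  using assms by (simp add: omega_eq faceW K3 dd_Xpow_odd red_zero del: power_Suc)

lemma omega_cycle: "odd n \<Longrightarrow> is_cycle n q (omega q)"
proof -
  assume n: "odd n"
  have "omega q \<in> Om q" by (simp add: omega_eq Om_W)
  then show ?thesis unfolding is_cycle_def Nq_def using face_omega face0_omega[OF n] by blast
qed

lemma faceVW: "faceO n q i (Var DX * (\<Prod>j\<in>S. Var (DY j))) = red (Var DX * (\<Prod>j\<in>S. dd (face_y n q i j)))"
  by (simp add: faceO_def subst_W subst_mult subst_Var)

lemma face_alpha: assumes "i \<in> {1..q}" shows "faceO n q i (alpha q) = 0"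
proof (cases "i < q")
  case True
  then obtain R where "(\<Prod>j\<in>{1..q}. dd (face_y n q i j)) = Var (DY i) * (Var (DY i) * R)"
    using K1[of i q "{1..q}" n] assms by auto
  then have "Var DX * (\<Prod>j\<in>{1..q}. dd (face_y n q i j)) = Var (DY i) * (Var (DY i) * (Var DX * R))"
    by (simp add: mult.left_commute)
  then show ?thesis by (simp add: alpha_eq faceVW red_kill dvar_DY)
next
  case False
  then have "i = q" using assms by auto
  then show ?thesis using assms by (simp add: alpha_eq faceVW K2 red_zero)
qed

lemma face0_alpha: assumes "even n" "0 < q" shows "faceO n q 0 (alpha q) = 0"
proof -
  have "Var DX * (\<Prod>j\<in>{1..q}. dd (face_y n q 0 j)) =
     Var DX * (Var DX * (Var X ^ n * (\<Prod>j\<in>{1..q} - {1}. dd (face_y n q 0 j))))"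
    using assms by (simp add: K3 dd_Xpow_even mult.left_commute mult.assoc del: One_nat_def power_Suc)
  then show ?thesis by (simp add: alpha_eq faceVW red_kill dvar_DX)
qed

lemma alpha_cycle: "even n \<Longrightarrow> is_cycle n q (alpha q)"
proof -
  assume n: "even n"
  have "alpha q \<in> Om q" by (simp add: alpha_eq allowed_def Om_VW)
  then show ?thesis unfolding is_cycle_def Nq_def using face_alpha face0_alpha[OF n] by blast
qed

lemma face_beta_expand: "faceO n q i (beta q) =
   red (Var X * (\<Prod>j\<in>{1..q}. dd (face_y n q i j))) +
   (\<Sum>l\<in>{1..q}. red (Var DX * (face_y n q i l * (\<Prod>j\<in>{1..q} - {l}. dd (face_y n q i j)))))"
  unfolding faceO_def beta_eq
  by (simp only: subst_add subst_sum subst_mult subst_Var subst_W red_add red_sum om_X om_DX om_Y om_DY)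

lemma face_beta_mid: assumes "1 \<le> i" "i < q" shows "faceO n q i (beta q) = 0"
proof -
  define F where "F l = red (Var DX * (face_y n q i l * (\<Prod>j\<in>{1..q} - {l}. dd (face_y n q i j))))" for l
  obtain R where R: "(\<Prod>j\<in>{1..q}. dd (face_y n q i j)) = Var (DY i) * (Var (DY i) * R)"
    using K1[of i q "{1..q}" n] assms by auto
  have T0: "red (Var X * (\<Prod>j\<in>{1..q}. dd (face_y n q i j))) = 0"
  proof -
    have "Var X * (\<Prod>j\<in>{1..q}. dd (face_y n q i j)) = Var (DY i) * (Var (DY i) * (Var X * R))"
      unfolding R by (simp add: mult.left_commute)
    then show ?thesis by (simp add: red_kill dvar_DY)
  qed
  have Fz: "F l = 0" if lq: "l \<in> {1..q} - {i, i+1}" for l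
  proof -
    obtain R' where R': "(\<Prod>j\<in>{1..q} - {l}. dd (face_y n q i j)) = Var (DY i) * (Var (DY i) * R')"
      using K1[of i q "{1..q} - {l}" n] assms lq by auto
    have "Var DX * (face_y n q i l * (\<Prod>j\<in>{1..q} - {l}. dd (face_y n q i j))) =
        Var (DY i) * (Var (DY i) * (Var DX * (face_y n q i l * R')))"
      unfolding R' by (simp add: mult.left_commute)
    then show ?thesis unfolding F_def by (simp add: red_kill dvar_DY)
  qed
  have "(\<Sum>l\<in>{1..q}. F l) = (\<Sum>l\<in>{i, i+1}. F l)"
    using assms Fz by (intro sum.mono_neutral_right) auto
  also have "\<dots> = F i + F (i+1)" by simp
  also have "F (i+1) = F i"
  proof -
    have "face_y n q i (i+1) = face_y n q i i" using assms by (simp add: fy_pos)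
    then show ?thesis unfolding F_def using P_mid1[OF assms, of n] P_mid2[OF assms, of n] by simp
  qed
  finally have "(\<Sum>l\<in>{1..q}. F l) = 0" by (simp add: add_self_poly2)
  then show ?thesis unfolding face_beta_expand T0 F_def by simp
qed

lemma face_beta_top: assumes "1 \<le> q" shows "faceO n q q (beta q) = 0"
proof -
  have "red (Var DX * (face_y n q q l * (\<Prod>j\<in>{1..q} - {l}. dd (face_y n q q j)))) = 0"
    if "l \<in> {1..q}" for l
  proof (cases "l = q")
    case True then show ?thesis using assms by (simp add: fy_qq red_zero)
  next
    case False then show ?thesis using assms that by (simp add: K2 red_zero)
  qed
  then show ?thesis unfolding face_beta_expand using assms by (simp add: K2 red_zero)
qed

lemma face_beta: "i \<in> {1..q} \<Longrightarrow> faceO n q i (beta q) = 0"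
  by (cases "i < q") (auto simp: face_beta_mid face_beta_top)

lemma face0_beta: assumes "even n" "0 < q" shows "faceO n q 0 (beta q) = 0"
proof -
  define F where "F l = red (Var DX * (face_y n q 0 l * (\<Prod>j\<in>{1..q} - {l}. dd (face_y n q 0 j))))" for l
  let ?R0 = "\<Prod>j\<in>{1..q} - {1}. dd (face_y n q 0 j)"
  have e1: "(\<Prod>j\<in>{1..q}. dd (face_y n q 0 j)) = Var X ^ n * Var DX * ?R0"
    using assms K3[of "{1..q}" n q] by (simp add: dd_Xpow_even del: power_Suc One_nat_def)
  have T0: "red (Var X * (\<Prod>j\<in>{1..q}. dd (face_y n q 0 j))) = F 1"
  proof -
    have "Var X * (\<Prod>j\<in>{1..q}. dd (face_y n q 0 j)) = Var DX * (face_y n q 0 1 * ?R0)"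
      unfolding e1 fy_01 by (simp add: ac_simps)
    then show ?thesis unfolding F_def by simp
  qed
  have Fz: "F l = 0" if lq: "l \<in> {1..q} - {1}" for l
  proof -
    have "(\<Prod>j\<in>{1..q} - {l}. dd (face_y n q 0 j)) = Var X ^ n * Var DX * (\<Prod>j\<in>{1..q} - {l} - {1}. dd (face_y n q 0 j))"
      using assms lq K3[of "{1..q} - {l}" n q] by (simp add: dd_Xpow_even del: power_Suc One_nat_def)
    then have "Var DX * (face_y n q 0 l * (\<Prod>j\<in>{1..q} - {l}. dd (face_y n q 0 j))) =
        Var DX * (Var DX * (face_y n q 0 l * Var X ^ n * (\<Prod>j\<in>{1..q} - {l} - {1}. dd (face_y n q 0 j))))"
      by (simp add: ac_simps)
    then show ?thesis unfolding F_def by (simp add: red_kill dvar_DX)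
  qed
  have "(\<Sum>l\<in>{1..q}. F l) = (\<Sum>l\<in>{1}. F l)"
    using assms Fz by (intro sum.mono_neutral_right) auto
  then have "(\<Sum>l\<in>{1..q}. F l) = F 1" by simp
  then show ?thesis unfolding face_beta_expand T0 F_def[symmetric] by (simp add: add_self_poly2)
qed

lemma beta_Om: "beta q \<in> Om q"
  unfolding beta_eq
  by (intro Om_add Om_sum Om_VW Om_VVW) (auto simp: allowed_def)

lemma beta_cycle: "even n \<Longrightarrow> is_cycle n q (beta q)"
  unfolding is_cycle_def Nq_def using beta_Om face_beta face0_beta by blast

lemma in_Dq: assumes "p \<in> Om q" "i \<le> q" shows "degenO i p \<in> Dq (q + 1)"
proof -
  have "degenO i p \<in> (\<Union>i\<in>{i. i + 1 \<le> q + 1}. degenO i ` Om (q + 1 - 1))"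
    using assms by auto
  then have "finite {degenO i p} \<and> {degenO i p} \<subseteq> (\<Union>i\<in>{i. i + 1 \<le> q + 1}. degenO i ` Om (q + 1 - 1))"
    by auto
  moreover have "degenO i p = sum id {degenO i p}" by simp
  ultimately show ?thesis unfolding Dq_def f2span_def by blast
qed

definition sdg :: "nat \<Rightarrow> nat \<Rightarrow> nat" where "sdg i j = (if j \<le> i then j else j + 1)"

lemma degen_y_eq: "degen_y i j = Var (Y (sdg i j))"
  by (simp add: degen_y_def sdg_def)

lemma degenW: "degenO i (\<Prod>j\<in>S. Var (DY j)) = red (\<Prod>j\<in>S. Var (DY (sdg i j)))"
  by (simp add: degenO_def subst_W degen_y_eq dd_VarY)

lemma degenVW: "degenO i (Var (Y r) * (\<Prod>j\<in>S. Var (DY j))) = red (Var (Y (sdg i r)) * (\<Prod>j\<in>S. Var (DY (sdg i j))))"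
  by (simp add: degenO_def subst_W subst_mult subst_Var degen_y_eq dd_VarY)

lemma D1: assumes "1 \<le> r" "r \<le> q + 1" shows "omega_i (q + 1) r \<in> Dq (q + 1)"
proof -
  have "(\<Prod>j\<in>{1..q}. Var (DY (sdg (r-1) j))) = (\<Prod>j\<in>{1..q+1} - {r}. Var (DY j))"
    by (rule prod.reindex_bij_betw[of "sdg (r-1)" _ _ "\<lambda>k. Var (DY k)"],
        rule bij_betw_byWitness[where f'="\<lambda>k. if k < r then k else k - 1"]) (use assms in \<open>auto simp: sdg_def\<close>)
  then have "omega_i (q + 1) r = degenO (r - 1) (\<Prod>j\<in>{1..q}. Var (DY j))"
    by (simp add: omega_i_def degenW)
  moreover have "degenO (r - 1) (\<Prod>j\<in>{1..q}. Var (DY j)) \<in> Dq (q + 1)"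
    using assms by (intro in_Dq Om_W) auto
  ultimately show ?thesis by simp
qed

lemma D2: assumes "1 \<le> j" "j < k" "k \<le> q + 1" shows "omega_ij (q + 1) j k \<in> Dq (q + 1)"
proof -
  have "(\<Prod>l\<in>{1..q} - {k-1}. Var (DY (sdg (j-1) l))) = (\<Prod>l\<in>{1..q+1} - {j, k}. Var (DY l))"
    by (rule prod.reindex_bij_betw[of "sdg (j-1)" _ _ "\<lambda>k. Var (DY k)"],
        rule bij_betw_byWitness[where f'="\<lambda>m. if m < j then m else m - 1"]) (use assms in \<open>auto simp: sdg_def\<close>)
  then have "omega_ij (q + 1) j k = degenO (j - 1) (\<Prod>l\<in>{1..q} - {k-1}. Var (DY l))"
    by (simp add: omega_ij_def degenW)
  moreover have "degenO (j - 1) (\<Prod>l\<in>{1..q} - {k-1}. Var (DY l)) \<in> Dq (q + 1)"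
    using assms by (intro in_Dq Om_W) auto
  ultimately show ?thesis by simp
qed

lemma D3: assumes "1 \<le> j" "j < k" "k \<le> q + 1" "1 \<le> r" "r \<le> q + 1"
  shows "red (Var (Y r) * omega_ij (q + 1) j k) \<in> Dq (q + 1)"
proof (cases "r = j")
  case True
  have "(\<Prod>l\<in>{1..q} - {j}. Var (DY (sdg (k-1) l))) = (\<Prod>l\<in>{1..q+1} - {j, k}. Var (DY l))"
    by (rule prod.reindex_bij_betw[of "sdg (k-1)" _ _ "\<lambda>k. Var (DY k)"],
        rule bij_betw_byWitness[where f'="\<lambda>m. if m < k then m else m - 1"]) (use assms in \<open>auto simp: sdg_def\<close>)
  moreover have "sdg (k-1) j = j" using assms by (simp add: sdg_def)
  ultimately have "red (Var (Y r) * omega_ij (q + 1) j k) = degenO (k - 1) (Var (Y j) * (\<Prod>l\<in>{1..q} - {j}. Var (DY l)))"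
    using True by (simp add: omega_ij_eq degenVW)
  moreover have "degenO (k - 1) (Var (Y j) * (\<Prod>l\<in>{1..q} - {j}. Var (DY l))) \<in> Dq (q + 1)"
    using assms by (intro in_Dq Om_VW) (auto simp: allowed_def)
  ultimately show ?thesis by simp
next
  case False
  define r' where "r' = (if r < j then r else r - 1)"
  have "(\<Prod>l\<in>{1..q} - {k-1}. Var (DY (sdg (j-1) l))) = (\<Prod>l\<in>{1..q+1} - {j, k}. Var (DY l))"
    by (rule prod.reindex_bij_betw[of "sdg (j-1)" _ _ "\<lambda>k. Var (DY k)"],
        rule bij_betw_byWitness[where f'="\<lambda>m. if m < j then m else m - 1"]) (use assms in \<open>auto simp: sdg_def\<close>)
  moreover have "sdg (j-1) r' = r" using assms False by (auto simp: sdg_def r'_def)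
  ultimately have "red (Var (Y r) * omega_ij (q + 1) j k) = degenO (j - 1) (Var (Y r') * (\<Prod>l\<in>{1..q} - {k-1}. Var (DY l)))"
    by (simp add: omega_ij_eq degenVW)
  moreover have "r' \<in> {1..q}" using assms False by (auto simp: r'_def)
  then have "Y r' \<in> allowed q" unfolding allowed_def by blast
  moreover have "degenO (j - 1) (Var (Y r') * (\<Prod>l\<in>{1..q} - {k-1}. Var (DY l))) \<in> Dq (q + 1)"
    if "Y r' \<in> allowed q"
    using assms that by (intro in_Dq Om_VW) auto
  ultimately show ?thesis by simp
qed

theorem lemma2p3:
  fixes n q :: nat
  assumes "n \<ge> 1"
  shows "(odd n \<longrightarrow> is_cycle n q (omega q))
       \<and> (even n \<longrightarrow> is_cycle n q (alpha q) \<and> is_cycle n q (beta q))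
       \<and> (\<forall>r. 1 \<le> r \<and> r \<le> q + 1 \<longrightarrow> omega_i (q + 1) r \<in> Dq (q + 1))
       \<and> (\<forall>j k. 1 \<le> j \<and> j < k \<and> k \<le> q + 1 \<longrightarrow>
             omega_ij (q + 1) j k \<in> Dq (q + 1)
           \<and> (\<forall>r. 1 \<le> r \<and> r \<le> q + 1 \<longrightarrow>
                red (Var (Y r) * omega_ij (q + 1) j k) \<in> Dq (q + 1)))"
proof (intro conjI impI allI)
  show "odd n \<Longrightarrow> is_cycle n q (omega q)" by (rule omega_cycle)
  show "even n \<Longrightarrow> is_cycle n q (alpha q)" by (rule alpha_cycle)
  show "even n \<Longrightarrow> is_cycle n q (beta q)" by (rule beta_cycle)
  show "omega_i (q + 1) r \<in> Dq (q + 1)" if "1 \<le> r \<and> r \<le> q + 1" for r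
    using that D1 by blast
  show "omega_ij (q + 1) j k \<in> Dq (q + 1)" if "1 \<le> j \<and> j < k \<and> k \<le> q + 1" for j k
    using that D2 by blast
  show "red (Var (Y r) * omega_ij (q + 1) j k) \<in> Dq (q + 1)"
    if "1 \<le> j \<and> j < k \<and> k \<le> q + 1" "1 \<le> r \<and> r \<le> q + 1" for j k r
    using that D3 by blast
qed

end
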